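(* Let $\mathbf n\in\mathbb{Z}_{\ge 0}^{I}$ be an observed contingency table with total $N=\langle \mathbf n,\mathbf 1\rangle\ge 1$, and let $\lambda>0$ and $\lambda_h>0$ for every nonempty $h\subseteq\mathcal K$. Define, for $\theta\in\mathbb{R}^{I-1}$, $$P_\Lambda(\theta)=\frac1N\,\ell(\theta)-\lambda\sum_{h\subseteq\mathcal K,\,h\neq\emptyset}\lambda_h\|\theta_h\|_2 .$$ Then the program $\max_{\theta\in\mathbb{R}^{I-1}}P_\Lambda(\theta)$ admits a unique optimizer $\widehat\theta\in\mathbb{R}^{I-1}$, and for every nonempty $h$ its block $\widehat\theta_h$ satisfies $$-\frac1N U_h^{\top}(\mathbf n-\widehat{\mathbf m})+\lambda\lambda_h\frac{\widehat\theta_h}{\|\widehat\theta_h\|_2}=\mathbf 0\quad\text{if }\widehat\theta_h\neq\mathbf 0,\qquad \frac1N\big\|U_h^{\top}(\mathbf n-\widehat{\mathbf m})\big\|_2\le\lambda\lambda_h\quad\text{if }\widehat\theta_h=\mathbf 0,$$ where $\widehat{\mathbf m}=\frac{N}{\langle \exp(U\widehat\theta),\mathbf 1\rangle}\exp(U\widehat\theta)$ (exponential taken coordinatewise).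
   Context: Let $K\ge 1$ categorical variables be given, variable $k\in\mathcal K=\{1,\dots,K\}$ taking values in $\{1,\dots,I_k\}$ with $I_k\ge 2$. The set of cells is $\mathcal I=\prod_{k}\{1,\dots,I_k\}$, of cardinality $I=\prod_k I_k$; $\mathbb{R}^{\mathcal I}$ is identified with $\mathbb{R}^I$ with the standard inner product, and $\mathbf 1$ is the all-ones vector. For $h\subseteq\mathcal K$ and a cell $i$, write $i_h=(i_k)_{k\in h}$. Let $\mathcal W_h=\{f\in\mathbb{R}^{\mathcal I}: f(i)=f(j)\text{ whenever }i_h=j_h\}$ and $\mathcal U_h=\mathcal W_h\cap\big(\sum_{h'\subsetneq h}\mathcal W_{h'}\big)^{\perp}$ ($\mathcal U_\emptyset$ is the span of $\mathbf 1$). These subspaces are mutually orthogonal, $\mathbb{R}^{\mathcal I}=\bigoplus_{h\subseteq\mathcal K}\mathcal U_h$, and $d_h=\dim\mathcal U_h=\prod_{k\in h}(I_k-1)$. For each nonempty $h$ fix an $I\times d_h$ matrix $U_h$ whose columns form a basis of $\mathcal U_h$, and let $U=[U_h]_{h\neq\emptyset}$ be the $I\times(I-1)$ matrix obtained by adjoining them. Each $\theta\in\mathbb{R}^{I-1}$ is partitioned accordingly into blocks $\theta_h\in\mathbb{R}^{d_h}$, $h\neq\emptyset$. The log-likelihood of the saturated multinomial log-linear model is $$\ell(\theta)=\langle U^{\top}\mathbf n,\theta\rangle-N\log\langle \exp(U\theta),\mathbf 1\rangle+\log N!-\sum_{i}\log \mathbf n_i!.$$ *)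

theory Defs
  imports Complex_Main "HOL-Library.FuncSet"
begin

type_synonym cell = "nat \<Rightarrow> nat"

definition cells :: "nat \<Rightarrow> (nat \<Rightarrow> nat) \<Rightarrow> cell set" where
  "cells K Is = PiE {..<K} (\<lambda>k. {..<Is k})"

definition nonempty_subsets :: "nat \<Rightarrow> nat set set" where
  "nonempty_subsets K = {h. h \<subseteq> {..<K} \<and> h \<noteq> {}}"

definition cinner :: "cell set \<Rightarrow> (cell \<Rightarrow> real) \<Rightarrow> (cell \<Rightarrow> real) \<Rightarrow> real" where
  "cinner C f g = (\<Sum>i\<in>C. f i * g i)"

definition W_space :: "cell set \<Rightarrow> nat set \<Rightarrow> (cell \<Rightarrow> real) set" where
  "W_space C h = {f. \<forall>i\<in>C. \<forall>j\<in>C. restrict i h = restrict j h \<longrightarrow> f i = f j}"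

text \<open>U_h = W_h intersected with the orthogonal complement of the sum of W_h' for h' strictly
  contained in h (orthogonal to the sum iff orthogonal to every summand).\<close>
definition U_space :: "cell set \<Rightarrow> nat set \<Rightarrow> (cell \<Rightarrow> real) set" where
  "U_space C h = W_space C h \<inter>
     {f. \<forall>h'. h' \<subset> h \<longrightarrow> (\<forall>g\<in>W_space C h'. cinner C f g = 0)}"

definition dimU :: "(nat \<Rightarrow> nat) \<Rightarrow> nat set \<Rightarrow> nat" where
  "dimU Is h = (\<Prod>k\<in>h. Is k - 1)"

definition is_basis_cols :: "cell set \<Rightarrow> (nat \<Rightarrow> cell \<Rightarrow> real) \<Rightarrow> nat \<Rightarrow> (cell \<Rightarrow> real) set \<Rightarrow> bool" where
  "is_basis_cols C B d S \<longleftrightarrow>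
     (\<forall>j<d. B j \<in> S) \<and>
     (\<forall>c. (\<forall>i\<in>C. (\<Sum>j<d. c j * B j i) = 0) \<longrightarrow> (\<forall>j<d. c j = 0)) \<and>
     (\<forall>f\<in>S. \<exists>c. \<forall>i\<in>C. f i = (\<Sum>j<d. c j * B j i))"

text \<open>Parameter vectors theta in R^(I-1), organised in blocks theta_h in R^(d_h).\<close>
definition params :: "nat \<Rightarrow> (nat \<Rightarrow> nat) \<Rightarrow> (nat set \<Rightarrow> nat \<Rightarrow> real) set" where
  "params K Is = {\<theta>. \<forall>h j. (h \<notin> nonempty_subsets K \<or> j \<ge> dimU Is h) \<longrightarrow> \<theta> h j = 0}"

definition Utheta :: "nat \<Rightarrow> (nat \<Rightarrow> nat) \<Rightarrow> (nat set \<Rightarrow> nat \<Rightarrow> cell \<Rightarrow> real)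
    \<Rightarrow> (nat set \<Rightarrow> nat \<Rightarrow> real) \<Rightarrow> cell \<Rightarrow> real" where
  "Utheta K Is B \<theta> i = (\<Sum>h\<in>nonempty_subsets K. \<Sum>j<dimU Is h. B h j i * \<theta> h j)"

definition total :: "nat \<Rightarrow> (nat \<Rightarrow> nat) \<Rightarrow> (cell \<Rightarrow> nat) \<Rightarrow> nat" where
  "total K Is n = (\<Sum>i\<in>cells K Is. n i)"

definition loglik :: "nat \<Rightarrow> (nat \<Rightarrow> nat) \<Rightarrow> (nat set \<Rightarrow> nat \<Rightarrow> cell \<Rightarrow> real)
    \<Rightarrow> (cell \<Rightarrow> nat) \<Rightarrow> (nat set \<Rightarrow> nat \<Rightarrow> real) \<Rightarrow> real" where
  "loglik K Is B n \<theta> =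
     (\<Sum>i\<in>cells K Is. real (n i) * Utheta K Is B \<theta> i)
     - real (total K Is n) * ln (\<Sum>i\<in>cells K Is. exp (Utheta K Is B \<theta> i))
     + ln (fact (total K Is n)) - (\<Sum>i\<in>cells K Is. ln (fact (n i)))"

definition block_norm :: "(nat \<Rightarrow> nat) \<Rightarrow> (nat set \<Rightarrow> nat \<Rightarrow> real) \<Rightarrow> nat set \<Rightarrow> real" where
  "block_norm Is \<theta> h = sqrt (\<Sum>j<dimU Is h. (\<theta> h j)\<^sup>2)"

definition penalized :: "nat \<Rightarrow> (nat \<Rightarrow> nat) \<Rightarrow> (nat set \<Rightarrow> nat \<Rightarrow> cell \<Rightarrow> real)
    \<Rightarrow> (cell \<Rightarrow> nat) \<Rightarrow> real \<Rightarrow> (nat set \<Rightarrow> real) \<Rightarrow> (nat set \<Rightarrow> nat \<Rightarrow> real) \<Rightarrow> real" where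
  "penalized K Is B n lam lamh \<theta> =
     loglik K Is B n \<theta> / real (total K Is n)
     - lam * (\<Sum>h\<in>nonempty_subsets K. lamh h * block_norm Is \<theta> h)"

definition fitted :: "nat \<Rightarrow> (nat \<Rightarrow> nat) \<Rightarrow> (nat set \<Rightarrow> nat \<Rightarrow> cell \<Rightarrow> real)
    \<Rightarrow> (cell \<Rightarrow> nat) \<Rightarrow> (nat set \<Rightarrow> nat \<Rightarrow> real) \<Rightarrow> cell \<Rightarrow> real" where
  "fitted K Is B n \<theta> i =
     real (total K Is n) / (\<Sum>i'\<in>cells K Is. exp (Utheta K Is B \<theta> i')) * exp (Utheta K Is B \<theta> i)"

definition score :: "nat \<Rightarrow> (nat \<Rightarrow> nat) \<Rightarrow> (nat set \<Rightarrow> nat \<Rightarrow> cell \<Rightarrow> real)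
    \<Rightarrow> (cell \<Rightarrow> nat) \<Rightarrow> (nat set \<Rightarrow> nat \<Rightarrow> real) \<Rightarrow> nat set \<Rightarrow> nat \<Rightarrow> real" where
  "score K Is B n \<theta> h j =
     (\<Sum>i\<in>cells K Is. B h j i * (real (n i) - fitted K Is B n \<theta> i))"

end

theory Submission
  imports Defs "HOL-Analysis.Analysis"
begin


lemma finite_cells: "finite (cells K Is)"
  unfolding cells_def by (simp add: finite_PiE)

lemma finite_NS: "finite (nonempty_subsets K)"
proof -
  have "nonempty_subsets K \<subseteq> Pow {..<K}" unfolding nonempty_subsets_def by auto
  then show ?thesis by (rule finite_subset) simp
qed

lemma cells_ne: assumes "\<forall>k<K. Is k \<ge> 2" shows "cells K Is \<noteq> {}"
proof -
  have "\<forall>k\<in>{..<K}. (0::nat) \<in> {..<Is k}" using assms by fastforce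
  then have "\<forall>k\<in>{..<K}. {..<Is k} \<noteq> {}" by blast
  then show ?thesis unfolding cells_def by (simp add: PiE_eq_empty_iff)
qed

lemma restrict_eq_iff: "(restrict i h = restrict j h) = (\<forall>k\<in>h. i k = j k)"
  by (auto simp: restrict_def fun_eq_iff)

lemma Utheta_lin:
  "Utheta K Is B (\<lambda>h j. a * \<theta>1 h j + b * \<theta>2 h j) i = a * Utheta K Is B \<theta>1 i + b * Utheta K Is B \<theta>2 i"
  unfolding Utheta_def by (simp add: algebra_simps sum.distrib sum_distrib_left)

lemma Utheta_add:
  "Utheta K Is B (\<lambda>h j. \<theta>1 h j + t * \<theta>2 h j) i = Utheta K Is B \<theta>1 i + t * Utheta K Is B \<theta>2 i"
  using Utheta_lin[of K Is B 1 \<theta>1 t \<theta>2 i] by simp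

lemma params_lin: "\<theta>1 \<in> params K Is \<Longrightarrow> \<theta>2 \<in> params K Is \<Longrightarrow> (\<lambda>h j. a * \<theta>1 h j + b * \<theta>2 h j) \<in> params K Is"
  unfolding params_def by auto

lemma params_add: "\<theta>1 \<in> params K Is \<Longrightarrow> \<theta>2 \<in> params K Is \<Longrightarrow> (\<lambda>h j. \<theta>1 h j + t * \<theta>2 h j) \<in> params K Is"
  unfolding params_def by auto

lemma loglik_bound:
  assumes "cells K Is \<noteq> {}"
  shows "loglik K Is B n \<theta> \<le> ln (fact (total K Is n)) - (\<Sum>i\<in>cells K Is. ln (fact (n i)))"
proof -
  let ?C = "cells K Is" let ?u = "Utheta K Is B \<theta>"
  define S where "S = (\<Sum>i\<in>?C. exp (?u i))"
  have Spos: "S > 0" unfolding S_def using assms finite_cells by (intro sum_pos) auto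
  have "?u i \<le> ln S" if "i \<in> ?C" for i
  proof -
    have "exp (?u i) \<le> S" unfolding S_def using that finite_cells
      by (intro member_le_sum) auto
    then show ?thesis using Spos by (metis ln_exp ln_le_cancel_iff exp_gt_zero)
  qed
  then have "(\<Sum>i\<in>?C. real (n i) * ?u i) \<le> (\<Sum>i\<in>?C. real (n i) * ln S)"
    by (intro sum_mono mult_left_mono) auto
  also have "\<dots> = real (total K Is n) * ln S"
    unfolding total_def by (simp add: sum_distrib_right)
  finally show ?thesis unfolding loglik_def S_def by simp
qed

lemma score_sum:
  "(\<Sum>h\<in>nonempty_subsets K. \<Sum>j<dimU Is h. v h j * score K Is B n \<theta> h j)
   = (\<Sum>i\<in>cells K Is. Utheta K Is B v i * (real (n i) - fitted K Is B n \<theta> i))"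
proof -
  have "(\<Sum>h\<in>nonempty_subsets K. \<Sum>j<dimU Is h. v h j * score K Is B n \<theta> h j)
     = (\<Sum>h\<in>nonempty_subsets K. \<Sum>j<dimU Is h. \<Sum>i\<in>cells K Is. B h j i * v h j * (real (n i) - fitted K Is B n \<theta> i))"
    unfolding score_def by (simp add: sum_distrib_left mult_ac)
  also have "\<dots> = (\<Sum>h\<in>nonempty_subsets K. \<Sum>i\<in>cells K Is. \<Sum>j<dimU Is h. B h j i * v h j * (real (n i) - fitted K Is B n \<theta> i))"
    by (rule sum.cong[OF refl], rule sum.swap)
  also have "\<dots> = (\<Sum>i\<in>cells K Is. \<Sum>h\<in>nonempty_subsets K. \<Sum>j<dimU Is h. B h j i * v h j * (real (n i) - fitted K Is B n \<theta> i))"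
    by (rule sum.swap)
  also have "\<dots> = (\<Sum>i\<in>cells K Is. Utheta K Is B v i * (real (n i) - fitted K Is B n \<theta> i))"
    unfolding Utheta_def by (simp add: sum_distrib_right)
  finally show ?thesis .
qed

lemma loglik_deriv:
  assumes ne: "cells K Is \<noteq> {}"
  shows "((\<lambda>t. loglik K Is B n (\<lambda>h j. \<theta> h j + t * v h j)) has_real_derivative
     (\<Sum>h\<in>nonempty_subsets K. \<Sum>j<dimU Is h. v h j * score K Is B n \<theta> h j)) (at 0)"
proof -
  let ?C = "cells K Is"
  define a where "a = Utheta K Is B \<theta>"
  define b where "b = Utheta K Is B v"
  define N where "N = real (total K Is n)"
  define c where "c = ln (fact (total K Is n) :: real) - (\<Sum>i\<in>cells K Is. ln (fact (n i) :: real))"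
  define S where "S = (\<Sum>i\<in>?C. exp (a i))"
  have Spos: "S > 0" unfolding S_def using ne finite_cells by (intro sum_pos) auto
  have eq: "loglik K Is B n (\<lambda>h j. \<theta> h j + t * v h j) =
     (\<Sum>i\<in>?C. real (n i) * (a i + t * b i)) - N * ln (\<Sum>i\<in>?C. exp (a i + t * b i)) + c" for t
    unfolding loglik_def a_def b_def N_def c_def Utheta_add by simp
  have d: "((\<lambda>t. (\<Sum>i\<in>?C. real (n i) * (a i + t * b i)) - N * ln (\<Sum>i\<in>?C. exp (a i + t * b i)) + c)
     has_real_derivative ((\<Sum>i\<in>?C. real (n i) * b i) - N * ((\<Sum>i\<in>?C. exp (a i) * b i) / S))) (at 0)"
    apply (rule derivative_eq_intros refl | simp add: Spos[unfolded S_def])+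
    apply (simp add: S_def mult_ac)
    done
  have "(\<Sum>i\<in>?C. real (n i) * b i) - N * ((\<Sum>i\<in>?C. exp (a i) * b i) / S)
      = (\<Sum>i\<in>?C. b i * (real (n i) - fitted K Is B n \<theta> i))"
    unfolding fitted_def a_def[symmetric] S_def[symmetric] N_def[symmetric]
    by (simp add: algebra_simps sum_subtractf sum_distrib_left sum_divide_distrib)
  with d show ?thesis unfolding eq score_sum b_def by simp
qed

lemma cont_coord: "continuous_on S (\<lambda>\<theta>::'a \<Rightarrow> 'b \<Rightarrow> real. \<theta> h j)"
proof -
  have "continuous_on UNIV ((\<lambda>y::'b\<Rightarrow>real. y j) \<circ> (\<lambda>\<theta>::'a \<Rightarrow> 'b \<Rightarrow> real. \<theta> h))"
    by (rule continuous_on_compose) (auto intro: continuous_on_subset[OF continuous_on_product_coordinates])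
  then have "continuous_on UNIV (\<lambda>\<theta>::'a \<Rightarrow> 'b \<Rightarrow> real. \<theta> h j)" by (simp add: o_def)
  then show ?thesis by (rule continuous_on_subset) auto
qed

lemma compact_PiE_UNIV:
  fixes X :: "'a \<Rightarrow> 'b::topological_space set"
  assumes "\<And>i. compact (X i)" shows "compact (PiE UNIV X)"
proof -
  have "compactin (product_topology (\<lambda>i. euclidean) UNIV) (PiE UNIV X)"
    unfolding compactin_PiE using assms by simp
  then show ?thesis unfolding euclidean_product_topology by simp
qed

lemma cont_pen:
  assumes ne: "cells K Is \<noteq> {}" and N: "total K Is n \<ge> 1"
  shows "continuous_on S (penalized K Is B n lam lamh)"
proof -
  have pos: "(\<Sum>i\<in>cells K Is. exp (Utheta K Is B \<theta> i)) \<noteq> 0" for \<theta>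
    using ne finite_cells by (metis (no_types, lifting) exp_gt_zero less_irrefl sum_pos)
  show ?thesis
    unfolding penalized_def[abs_def] loglik_def block_norm_def
    apply (intro continuous_intros)
    using pos N unfolding Utheta_def by (auto intro!: continuous_intros cont_coord)
qed

lemma abs_le_block_norm: "j < dimU Is h \<Longrightarrow> \<bar>\<theta> h j\<bar> \<le> block_norm Is \<theta> h"
proof -
  assume j: "j < dimU Is h"
  have "(\<theta> h j)\<^sup>2 \<le> (\<Sum>j<dimU Is h. (\<theta> h j)\<^sup>2)"
    using j by (intro member_le_sum) auto
  then have "sqrt ((\<theta> h j)\<^sup>2) \<le> block_norm Is \<theta> h"
    unfolding block_norm_def by (rule real_sqrt_le_mono)
  then show ?thesis by simp
qed

lemma block_norm_nonneg: "0 \<le> block_norm Is \<theta> h"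
  unfolding block_norm_def by (simp add: sum_nonneg)

lemma exists_max:
  assumes ne: "cells K Is \<noteq> {}" and N: "total K Is n \<ge> 1" and lam: "lam > 0"
    and lamh: "\<forall>h\<in>nonempty_subsets K. lamh h > 0"
  shows "\<exists>\<theta>\<in>params K Is. \<forall>\<theta>'\<in>params K Is. penalized K Is B n lam lamh \<theta>' \<le> penalized K Is B n lam lamh \<theta>"
proof -
  define P where "P = penalized K Is B n lam lamh"
  define NS where "NS = nonempty_subsets K"
  define c0 where "c0 = (ln (fact (total K Is n) :: real) - (\<Sum>i\<in>cells K Is. ln (fact (n i) :: real))) / real (total K Is n)"
  have Npos: "real (total K Is n) > 0" using N by simp
  have sumnn: "0 \<le> (\<Sum>h\<in>NS. lamh h * block_norm Is \<theta> h)" for \<theta>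
    using lamh unfolding NS_def by (intro sum_nonneg mult_nonneg_nonneg block_norm_nonneg) (auto intro: less_imp_le)
  have Pb: "P \<theta> \<le> c0 - lam * (\<Sum>h\<in>NS. lamh h * block_norm Is \<theta> h)" for \<theta>
  proof -
    have "loglik K Is B n \<theta> / real (total K Is n) \<le> c0"
      unfolding c0_def using loglik_bound[OF ne, of B n \<theta>] Npos by (simp add: divide_right_mono)
    then show ?thesis unfolding P_def penalized_def NS_def by simp
  qed
  define z where "z = (\<lambda>(h::nat set) (j::nat). 0::real)"
  have c0z: "0 \<le> c0 - P z" using Pb[of z] sumnn[of z] lam by (smt (verit) mult_nonneg_nonneg)
  define R where "R = (\<Sum>h\<in>NS. (c0 - P z) / (lam * lamh h))"
  have tnn: "0 \<le> (c0 - P z) / (lam * lamh h)" if "h \<in> NS" for h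
    using c0z lam lamh that unfolding NS_def by (simp add: divide_nonneg_pos)
  have R0: "0 \<le> R" unfolding R_def using tnn by (simp add: sum_nonneg)
  have key: "\<bar>\<theta> h j\<bar> \<le> R" if Pz: "P z \<le> P \<theta>" and h: "h \<in> NS" and j: "j < dimU Is h" for \<theta> h j
  proof -
    have "lamh h * block_norm Is \<theta> h \<le> (\<Sum>h\<in>NS. lamh h * block_norm Is \<theta> h)"
      using h lamh unfolding NS_def
      by (intro member_le_sum mult_nonneg_nonneg block_norm_nonneg) (auto simp: finite_NS intro: less_imp_le)
    then have "lam * (lamh h * block_norm Is \<theta> h) \<le> c0 - P z"
      using Pb[of \<theta>] Pz lam by (smt (verit) mult_left_mono)
    then have "block_norm Is \<theta> h \<le> (c0 - P z) / (lam * lamh h)"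
      using lam lamh h unfolding NS_def by (simp add: field_simps)
    also have "\<dots> \<le> R" unfolding R_def using tnn h
      by (intro member_le_sum) (auto simp: NS_def finite_NS)
    finally show ?thesis using abs_le_block_norm[OF j, of \<theta>] by simp
  qed
  define X where "X = (\<lambda>h. PiE UNIV (\<lambda>j. if h \<in> NS \<and> j < dimU Is h then {-R..R} else {0::real}))"
  define Ks where "Ks = PiE UNIV X"
  have cK: "compact Ks" unfolding Ks_def X_def
    by (intro compact_PiE_UNIV) auto
  have memK: "\<theta> \<in> Ks \<longleftrightarrow> (\<forall>h j. \<theta> h j \<in> (if h \<in> NS \<and> j < dimU Is h then {-R..R} else {0}))" for \<theta>
    unfolding Ks_def X_def by (auto simp: PiE_iff)
  have Kp: "Ks \<subseteq> params K Is"
  proof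
    fix x assume "x \<in> Ks"
    then have all: "\<forall>h j. x h j \<in> (if h \<in> NS \<and> j < dimU Is h then {-R..R} else {0})" using memK by blast
    have "x h j = 0" if "h \<notin> NS \<or> dimU Is h \<le> j" for h j
    proof -
      have "x h j \<in> (if h \<in> NS \<and> j < dimU Is h then {-R..R} else {0})" using all by blast
      moreover have "\<not> (h \<in> NS \<and> j < dimU Is h)" using that by auto
      ultimately show ?thesis by simp
    qed
    then show "x \<in> params K Is" unfolding params_def NS_def by blast
  qed
  have zK: "z \<in> Ks" using memK R0 unfolding z_def by auto
  have inK: "\<theta> \<in> Ks" if "\<theta> \<in> params K Is" "P z \<le> P \<theta>" for \<theta>
    unfolding memK using key[OF that(2)] that(1) unfolding params_def NS_def
    by (auto simp: abs_le_iff) (smt (verit))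
  obtain \<theta>0 where t0: "\<theta>0 \<in> Ks" "\<forall>y\<in>Ks. P y \<le> P \<theta>0"
    using continuous_attains_sup[OF cK _ cont_pen[OF ne N]] zK unfolding P_def by blast
  have "\<forall>\<theta>'\<in>params K Is. P \<theta>' \<le> P \<theta>0"
  proof
    fix \<theta>' assume p: "\<theta>' \<in> params K Is"
    show "P \<theta>' \<le> P \<theta>0"
    proof (cases "P z \<le> P \<theta>'")
      case True then show ?thesis using inK[OF p] t0 by blast
    next
      case False then show ?thesis using t0 zK by force
    qed
  qed
  then show ?thesis using t0 Kp unfolding P_def by blast
qed



definition fib :: "nat \<Rightarrow> (nat \<Rightarrow> nat) \<Rightarrow> nat set \<Rightarrow> cell \<Rightarrow> cell set" where
  "fib K Is h' x = {j\<in>cells K Is. restrict j h' = restrict x h'}"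

lemma fib_bij:
  assumes i: "i \<in> cells K Is" and i': "i' \<in> cells K Is"
  shows "bij_betw (\<lambda>j k. if k \<in> h' then i' k else j k) (fib K Is h' i) (fib K Is h' i')"
proof (rule bij_betw_byWitness[where f'="\<lambda>j k. if k \<in> h' then i k else j k"])
  show "\<forall>a\<in>fib K Is h' i. (\<lambda>k. if k \<in> h' then i k else (\<lambda>k. if k \<in> h' then i' k else a k) k) = a"
    unfolding fib_def restrict_eq_iff by (auto simp: fun_eq_iff)
  show "\<forall>a\<in>fib K Is h' i'. (\<lambda>k. if k \<in> h' then i' k else (\<lambda>k. if k \<in> h' then i k else a k) k) = a"
    unfolding fib_def restrict_eq_iff by (auto simp: fun_eq_iff)
  show "(\<lambda>j k. if k \<in> h' then i' k else j k) ` fib K Is h' i \<subseteq> fib K Is h' i'"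
    using i' unfolding fib_def restrict_eq_iff cells_def by (auto simp: PiE_iff extensional_def)
  show "(\<lambda>j k. if k \<in> h' then i k else j k) ` fib K Is h' i' \<subseteq> fib K Is h' i"
    using i unfolding fib_def restrict_eq_iff cells_def by (auto simp: PiE_iff extensional_def)
qed

lemma fib_card:
  assumes "i \<in> cells K Is" "i' \<in> cells K Is"
  shows "card (fib K Is h' i) = card (fib K Is h' i')"
  using bij_betw_same_card[OF fib_bij[OF assms]] .

lemma W_eq: "f \<in> W_space C h \<Longrightarrow> i \<in> C \<Longrightarrow> j \<in> C \<Longrightarrow> restrict i h = restrict j h \<Longrightarrow> f i = f j"
  unfolding W_space_def by blast

lemma fib_sum:
  assumes i: "i \<in> cells K Is" and i': "i' \<in> cells K Is" and f: "f \<in> W_space (cells K Is) h"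
    and agree: "\<forall>k\<in>h \<inter> h'. i k = i' k"
  shows "(\<Sum>j\<in>fib K Is h' i. f j) = (\<Sum>j\<in>fib K Is h' i'. f j)"
proof -
  let ?phi = "\<lambda>j k. if k \<in> h' then i' k else j k"
  have "(\<Sum>j\<in>fib K Is h' i. f (?phi j)) = (\<Sum>j\<in>fib K Is h' i'. f j)"
    by (rule sum.reindex_bij_betw[OF fib_bij[OF i i']])
  moreover have "f (?phi j) = f j" if j: "j \<in> fib K Is h' i" for j
  proof -
    have jC: "j \<in> cells K Is" and jr: "\<forall>k\<in>h'. j k = i k" using j unfolding fib_def restrict_eq_iff by auto
    have pC: "?phi j \<in> cells K Is" using fib_bij[OF i i'] j unfolding bij_betw_def fib_def by blast
    have "restrict j h = restrict (?phi j) h" unfolding restrict_eq_iff using jr agree by auto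
    then show ?thesis using W_eq[OF f jC pC] by simp
  qed
  ultimately show ?thesis by simp
qed

lemma W_const: "(\<lambda>_. c) \<in> W_space C h"
  unfolding W_space_def by simp

lemma cinner_comm: "cinner C f g = cinner C g f"
  unfolding cinner_def by (simp add: mult.commute)

lemma U_orth:
  assumes f: "f \<in> U_space (cells K Is) h" and g: "g \<in> U_space (cells K Is) h'" and hh: "h \<noteq> h'"
  shows "cinner (cells K Is) f g = 0"
proof -
  let ?C = "cells K Is"
  have fW: "f \<in> W_space ?C h" and gW: "g \<in> W_space ?C h'" using f g unfolding U_space_def by auto
  have fo: "\<And>a q. a \<subset> h \<Longrightarrow> q \<in> W_space ?C a \<Longrightarrow> cinner ?C f q = 0" using f unfolding U_space_def by auto
  have go: "\<And>a q. a \<subset> h' \<Longrightarrow> q \<in> W_space ?C a \<Longrightarrow> cinner ?C g q = 0" using g unfolding U_space_def by auto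
  show ?thesis
  proof (cases "h \<subset> h'")
    case True then show ?thesis using go[OF True fW] cinner_comm by metis
  next
    case F1: False
    show ?thesis
    proof (cases "h' \<subset> h")
      case True then show ?thesis using fo[OF True gW] by simp
    next
      case F2: False
      have ah': "h \<inter> h' \<subset> h'" using F1 F2 hh by blast
      show ?thesis
      proof (cases "?C = {}")
        case True then show ?thesis unfolding cinner_def by simp
      next
        case False
        then obtain i0 where i0: "i0 \<in> ?C" by blast
        define c0 where "c0 = card (fib K Is h' i0)"
        define Q where "Q = (\<lambda>i. \<Sum>j\<in>fib K Is h' i. f j)"
        have QW: "Q \<in> W_space ?C (h \<inter> h')"
          unfolding W_space_def
        proof (intro CollectI ballI impI)
          fix i i' assume ii: "i \<in> ?C" "i' \<in> ?C" and r: "restrict i (h \<inter> h') = restrict i' (h \<inter> h')"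
          then have "\<forall>k\<in>h \<inter> h'. i k = i' k" by (simp add: restrict_eq_iff)
          then show "Q i = Q i'" unfolding Q_def by (rule fib_sum[OF ii fW])
        qed
        have "cinner ?C g Q = 0" using go[OF ah' QW] .
        moreover have "cinner ?C Q g = real c0 * cinner ?C f g"
        proof -
          have fin: "finite ?C" by (rule finite_cells)
          have cnt: "(\<Sum>i\<in>?C. if restrict i h' = restrict j h' then c else 0) = c * real (card (fib K Is h' j))" for j and c :: real
          proof -
            have "(\<Sum>i\<in>?C. if restrict i h' = restrict j h' then c else 0) = (\<Sum>i\<in>{i\<in>?C. restrict i h' = restrict j h'}. c)"
              by (rule sum.inter_filter[OF fin, symmetric])
            then show ?thesis by (simp add: fib_def)
          qed
          have "cinner ?C Q g = (\<Sum>i\<in>?C. \<Sum>j\<in>?C. (if restrict j h' = restrict i h' then f j else 0) * g i)"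
            unfolding cinner_def Q_def fib_def by (simp add: sum.inter_filter[OF fin] sum_distrib_right)
          also have "\<dots> = (\<Sum>i\<in>?C. \<Sum>j\<in>?C. if restrict i h' = restrict j h' then f j * g j else 0)"
          proof (intro sum.cong refl)
            fix i j assume i: "i \<in> ?C" and j: "j \<in> ?C"
            show "(if restrict j h' = restrict i h' then f j else 0) * g i = (if restrict i h' = restrict j h' then f j * g j else 0)"
            proof (cases "restrict i h' = restrict j h'")
              case True then show ?thesis using W_eq[OF gW i j True] by simp
            next
              case False then show ?thesis by (simp add: eq_commute[of "restrict j h'"])
            qed
          qed
          also have "\<dots> = (\<Sum>j\<in>?C. \<Sum>i\<in>?C. if restrict i h' = restrict j h' then f j * g j else 0)"
            by (rule sum.swap)
          also have "\<dots> = (\<Sum>j\<in>?C. f j * g j * real (card (fib K Is h' j)))"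
            by (intro sum.cong refl cnt)
          also have "\<dots> = (\<Sum>j\<in>?C. f j * g j * real c0)"
            unfolding c0_def using fib_card[OF _ i0] by (intro sum.cong refl) simp
          finally show ?thesis unfolding cinner_def by (simp add: sum_distrib_left mult_ac)
        qed
        moreover have "c0 \<ge> 1"
        proof -
          have "i0 \<in> fib K Is h' i0" using i0 unfolding fib_def by simp
          moreover have "finite (fib K Is h' i0)" unfolding fib_def using finite_cells by simp
          ultimately show ?thesis unfolding c0_def by (metis card_0_eq empty_iff less_one not_le)
        qed
        ultimately show ?thesis using cinner_comm[of ?C Q g] by simp
      qed
    qed
  qed
qed



lemma cinner_lin:
  "cinner C (\<lambda>i. \<Sum>j\<in>A. a j * F j i) (\<lambda>i. \<Sum>j'\<in>A'. b j' * G j' i)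
   = (\<Sum>j\<in>A. \<Sum>j'\<in>A'. a j * b j' * cinner C (F j) (G j'))"
proof -
  have "cinner C (\<lambda>i. \<Sum>j\<in>A. a j * F j i) (\<lambda>i. \<Sum>j'\<in>A'. b j' * G j' i)
      = (\<Sum>i\<in>C. \<Sum>j\<in>A. \<Sum>j'\<in>A'. a j * b j' * (F j i * G j' i))"
    unfolding cinner_def by (simp add: sum_product mult_ac)
  also have "\<dots> = (\<Sum>j\<in>A. \<Sum>i\<in>C. \<Sum>j'\<in>A'. a j * b j' * (F j i * G j' i))"
    by (rule sum.swap)
  also have "\<dots> = (\<Sum>j\<in>A. \<Sum>j'\<in>A'. \<Sum>i\<in>C. a j * b j' * (F j i * G j' i))"
    by (intro sum.cong refl sum.swap)
  finally show ?thesis unfolding cinner_def by (simp add: sum_distrib_left)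
qed

lemma indep:
  assumes basis: "\<forall>h\<in>nonempty_subsets K.
                  is_basis_cols (cells K Is) (B h) (dimU Is h) (U_space (cells K Is) h)"
    and z: "\<forall>i\<in>cells K Is. Utheta K Is B \<delta> i = 0"
    and h: "h \<in> nonempty_subsets K" and j: "j < dimU Is h"
  shows "\<delta> h j = 0"
proof -
  let ?C = "cells K Is" let ?NS = "nonempty_subsets K"
  define v where "v = (\<lambda>h' i. \<Sum>j<dimU Is h'. \<delta> h' j * B h' j i)"
  have orth: "cinner ?C (v h) (v h') = 0" if "h' \<in> ?NS" "h' \<noteq> h" for h'
  proof -
    have "cinner ?C (B h j1) (B h' j2) = 0" if "j1 < dimU Is h" "j2 < dimU Is h'" for j1 j2
      using U_orth[of "B h j1" K Is h "B h' j2" h'] basis h \<open>h' \<in> ?NS\<close> \<open>h' \<noteq> h\<close> that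
      unfolding is_basis_cols_def by auto
    then show ?thesis unfolding v_def cinner_lin by simp
  qed
  have U: "Utheta K Is B \<delta> i = (\<Sum>h'\<in>?NS. v h' i)" for i
    unfolding Utheta_def v_def by (simp add: mult.commute)
  have "0 = cinner ?C (v h) (\<lambda>i. \<Sum>h'\<in>?NS. v h' i)"
    unfolding cinner_def using z U by simp
  also have "\<dots> = (\<Sum>h'\<in>?NS. cinner ?C (v h) (v h'))"
    unfolding cinner_def by (simp add: sum_distrib_left sum.swap[of _ ?C])
  also have "\<dots> = cinner ?C (v h) (v h)"
    using orth h finite_NS by (simp add: sum.remove[of ?NS h])
  finally have "(\<Sum>i\<in>?C. (v h i)\<^sup>2) = 0" unfolding cinner_def by (simp add: power2_eq_square)
  then have "\<forall>i\<in>?C. v h i = 0" using finite_cells by (simp add: sum_nonneg_eq_0_iff)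
  then show ?thesis using basis h j unfolding is_basis_cols_def v_def by blast
qed



lemma lagrange_id:
  fixes x y :: "'a \<Rightarrow> real"
  shows "(\<Sum>i\<in>A. \<Sum>j\<in>A. (x i * y j - x j * y i)\<^sup>2)
     = 2 * ((\<Sum>i\<in>A. (x i)\<^sup>2) * (\<Sum>i\<in>A. (y i)\<^sup>2) - (\<Sum>i\<in>A. x i * y i)\<^sup>2)"
proof -
  have e: "(x i * y j - x j * y i)\<^sup>2 = (x i)\<^sup>2 * (y j)\<^sup>2 + (x j)\<^sup>2 * (y i)\<^sup>2 - 2 * ((x i * y i) * (x j * y j))" for i j
    by (simp add: power2_eq_square algebra_simps)
  have s1: "(\<Sum>i\<in>A. \<Sum>j\<in>A. (x i)\<^sup>2 * (y j)\<^sup>2) = (\<Sum>i\<in>A. (x i)\<^sup>2) * (\<Sum>i\<in>A. (y i)\<^sup>2)"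
    by (rule sum_product[symmetric])
  have s2: "(\<Sum>i\<in>A. \<Sum>j\<in>A. (x j)\<^sup>2 * (y i)\<^sup>2) = (\<Sum>i\<in>A. (x i)\<^sup>2) * (\<Sum>i\<in>A. (y i)\<^sup>2)"
    by (subst sum.swap) (rule s1)
  have s3: "(\<Sum>i\<in>A. \<Sum>j\<in>A. (x i * y i) * (x j * y j)) = (\<Sum>i\<in>A. x i * y i)\<^sup>2"
    unfolding power2_eq_square by (rule sum_product[symmetric])
  have "(\<Sum>i\<in>A. \<Sum>j\<in>A. (x i)\<^sup>2 * (y j)\<^sup>2 + (x j)\<^sup>2 * (y i)\<^sup>2 - 2 * ((x i * y i) * (x j * y j)))
     = (\<Sum>i\<in>A. \<Sum>j\<in>A. (x i)\<^sup>2 * (y j)\<^sup>2) + (\<Sum>i\<in>A. \<Sum>j\<in>A. (x j)\<^sup>2 * (y i)\<^sup>2)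
       - 2 * (\<Sum>i\<in>A. \<Sum>j\<in>A. (x i * y i) * (x j * y j))"
    by (simp only: sum.distrib sum_subtractf sum_distrib_left)
  then show ?thesis unfolding e s1 s2 s3 by simp
qed

lemma lse_mid_aux:
  fixes a b :: "'a \<Rightarrow> real"
  assumes fin: "finite A" and ne: "A \<noteq> {}"
  defines "Sm \<equiv> (\<Sum>i\<in>A. exp ((a i + b i)/2))" and "Sa \<equiv> (\<Sum>i\<in>A. exp (a i))" and "Sb \<equiv> (\<Sum>i\<in>A. exp (b i))"
  shows "Sm\<^sup>2 \<le> Sa * Sb" and "(\<exists>i\<in>A. \<exists>j\<in>A. a i - b i \<noteq> a j - b j) \<Longrightarrow> Sm\<^sup>2 < Sa * Sb"
proof -
  define x where "x = (\<lambda>i. exp (a i / 2))"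
  define y where "y = (\<lambda>i. exp (b i / 2))"
  have xy: "x i * y i = exp ((a i + b i)/2)" for i unfolding x_def y_def by (simp add: exp_add[symmetric] add_divide_distrib)
  have xx: "(x i)\<^sup>2 = exp (a i)" for i unfolding x_def power2_eq_square by (simp add: exp_add[symmetric])
  have yy: "(y i)\<^sup>2 = exp (b i)" for i unfolding y_def power2_eq_square by (simp add: exp_add[symmetric])
  have L: "(\<Sum>i\<in>A. \<Sum>j\<in>A. (x i * y j - x j * y i)\<^sup>2) = 2 * (Sa * Sb - Sm\<^sup>2)"
    unfolding lagrange_id Sa_def Sb_def Sm_def xx yy xy ..
  have "0 \<le> (\<Sum>i\<in>A. \<Sum>j\<in>A. (x i * y j - x j * y i)\<^sup>2)" by (intro sum_nonneg) auto
  then show "Sm\<^sup>2 \<le> Sa * Sb" using L by simp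
  assume "\<exists>i\<in>A. \<exists>j\<in>A. a i - b i \<noteq> a j - b j"
  then obtain i j where ij: "i \<in> A" "j \<in> A" "a i - b i \<noteq> a j - b j" by blast
  have "x i * y j \<noteq> x j * y i"
  proof
    assume "x i * y j = x j * y i"
    then have "exp (a i / 2 + b j / 2) = exp (a j / 2 + b i / 2)" unfolding x_def y_def by (simp add: exp_add)
    then have "a i / 2 + b j / 2 = a j / 2 + b i / 2" by simp
    then show False using ij(3) by simp
  qed
  then have "0 < (x i * y j - x j * y i)\<^sup>2" by simp
  then have "0 < (\<Sum>j\<in>A. (x i * y j - x j * y i)\<^sup>2)"
    using fin ij by (intro sum_pos2[of A j]) auto
  then have "0 < (\<Sum>i\<in>A. \<Sum>j\<in>A. (x i * y j - x j * y i)\<^sup>2)"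
    by (rule sum_pos2[OF fin ij(1)]) (auto intro: sum_nonneg)
  then show "Sm\<^sup>2 < Sa * Sb" using L by simp
qed

lemma lse_mid:
  fixes a b :: "'a \<Rightarrow> real"
  assumes fin: "finite A" and ne: "A \<noteq> {}"
  shows "2 * ln (\<Sum>i\<in>A. exp ((a i + b i)/2)) \<le> ln (\<Sum>i\<in>A. exp (a i)) + ln (\<Sum>i\<in>A. exp (b i))"
    and "(\<exists>i\<in>A. \<exists>j\<in>A. a i - b i \<noteq> a j - b j) \<Longrightarrow>
         2 * ln (\<Sum>i\<in>A. exp ((a i + b i)/2)) < ln (\<Sum>i\<in>A. exp (a i)) + ln (\<Sum>i\<in>A. exp (b i))"
proof -
  define Sm where "Sm = (\<Sum>i\<in>A. exp ((a i + b i)/2))"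
  define Sa where "Sa = (\<Sum>i\<in>A. exp (a i))"
  define Sb where "Sb = (\<Sum>i\<in>A. exp (b i))"
  have pm: "Sm > 0" unfolding Sm_def using fin ne by (intro sum_pos) auto
  have pa: "Sa > 0" unfolding Sa_def using fin ne by (intro sum_pos) auto
  have pb: "Sb > 0" unfolding Sb_def using fin ne by (intro sum_pos) auto
  have e1: "2 * ln Sm = ln (Sm\<^sup>2)" using pm by (simp add: ln_realpow)
  have e2: "ln Sa + ln Sb = ln (Sa * Sb)" using pa pb by (simp add: ln_mult)
  show "2 * ln (\<Sum>i\<in>A. exp ((a i + b i)/2)) \<le> ln (\<Sum>i\<in>A. exp (a i)) + ln (\<Sum>i\<in>A. exp (b i))"
    using lse_mid_aux(1)[OF fin ne, of a b] pm pa pb unfolding Sm_def[symmetric] Sa_def[symmetric] Sb_def[symmetric] e1 e2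
    by simp
  assume h: "\<exists>i\<in>A. \<exists>j\<in>A. a i - b i \<noteq> a j - b j"
  show "2 * ln (\<Sum>i\<in>A. exp ((a i + b i)/2)) < ln (\<Sum>i\<in>A. exp (a i)) + ln (\<Sum>i\<in>A. exp (b i))"
    using lse_mid_aux(2)[OF fin ne h] pm pa pb unfolding Sm_def[symmetric] Sa_def[symmetric] Sb_def[symmetric] e1 e2
    by simp
qed



lemma B_sum0:
  assumes basis: "\<forall>h\<in>nonempty_subsets K.
                  is_basis_cols (cells K Is) (B h) (dimU Is h) (U_space (cells K Is) h)"
    and h: "h \<in> nonempty_subsets K" and j: "j < dimU Is h"
  shows "(\<Sum>i\<in>cells K Is. B h j i) = 0"
proof -
  have "B h j \<in> U_space (cells K Is) h" using basis h j unfolding is_basis_cols_def by auto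
  moreover have "{} \<subset> h" using h unfolding nonempty_subsets_def by auto
  ultimately have "cinner (cells K Is) (B h j) (\<lambda>_. 1) = 0"
    unfolding U_space_def using W_const by blast
  then show ?thesis unfolding cinner_def by simp
qed

lemma pen_form:
  assumes N: "total K Is n \<ge> 1"
  shows "penalized K Is B n lam lamh \<theta> =
    (\<Sum>i\<in>cells K Is. real (n i) * Utheta K Is B \<theta> i) / real (total K Is n)
    - ln (\<Sum>i\<in>cells K Is. exp (Utheta K Is B \<theta> i))
    + (ln (fact (total K Is n) :: real) - (\<Sum>i\<in>cells K Is. ln (fact (n i) :: real))) / real (total K Is n)
    - lam * (\<Sum>h\<in>nonempty_subsets K. lamh h * block_norm Is \<theta> h)"
proof -
  have Np: "real (total K Is n) \<noteq> 0" using N by simp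
  show ?thesis unfolding penalized_def loglik_def using Np
    by (simp add: diff_divide_distrib add_divide_distrib)
qed

lemma block_norm_mid:
  "block_norm Is (\<lambda>h j. 1/2 * \<theta>1 h j + 1/2 * \<theta>2 h j) h \<le> (block_norm Is \<theta>1 h + block_norm Is \<theta>2 h) / 2"
proof -
  have bn: "block_norm Is \<theta> h = L2_set (\<theta> h) {..<dimU Is h}" for \<theta> unfolding block_norm_def L2_set_def ..
  have "L2_set (\<lambda>j. 1/2 * \<theta>1 h j + 1/2 * \<theta>2 h j) {..<dimU Is h}
      \<le> L2_set (\<lambda>j. 1/2 * \<theta>1 h j) {..<dimU Is h} + L2_set (\<lambda>j. 1/2 * \<theta>2 h j) {..<dimU Is h}"
    by (rule L2_set_triangle_ineq)
  also have "\<dots> = 1/2 * L2_set (\<theta>1 h) {..<dimU Is h} + 1/2 * L2_set (\<theta>2 h) {..<dimU Is h}"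
    using L2_set_right_distrib[of "1/2" "\<theta>1 h" "{..<dimU Is h}"] L2_set_right_distrib[of "1/2" "\<theta>2 h" "{..<dimU Is h}"]
    by simp
  finally show ?thesis unfolding bn by simp
qed

lemma Utheta_sum0:
  assumes basis: "\<forall>h\<in>nonempty_subsets K.
                  is_basis_cols (cells K Is) (B h) (dimU Is h) (U_space (cells K Is) h)"
  shows "(\<Sum>i\<in>cells K Is. Utheta K Is B \<delta> i) = 0"
proof -
  have "(\<Sum>i\<in>cells K Is. Utheta K Is B \<delta> i)
     = (\<Sum>h\<in>nonempty_subsets K. \<Sum>i\<in>cells K Is. \<Sum>j<dimU Is h. B h j i * \<delta> h j)"
    unfolding Utheta_def by (rule sum.swap)
  also have "\<dots> = (\<Sum>h\<in>nonempty_subsets K. \<Sum>j<dimU Is h. \<Sum>i\<in>cells K Is. B h j i * \<delta> h j)"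
    by (intro sum.cong refl sum.swap)
  also have "\<dots> = (\<Sum>h\<in>nonempty_subsets K. \<Sum>j<dimU Is h. (\<Sum>i\<in>cells K Is. B h j i) * \<delta> h j)"
    by (simp add: sum_distrib_right)
  also have "\<dots> = 0" using B_sum0[OF basis] by simp
  finally show ?thesis .
qed

lemma lin_aux: "(xPm::real) = xLm - xlm + xc - xpm \<Longrightarrow> xP1 = xL1 - xl1 + xc - xp1 \<Longrightarrow> xP2 = xL2 - xl2 + xc - xp2 \<Longrightarrow> xP1 = xP2
  \<Longrightarrow> 2*xlm < xl1 + xl2 \<Longrightarrow> xpm \<le> (xp1+xp2)/2 \<Longrightarrow> xLm = (xL1+xL2)/2 \<Longrightarrow> xP1 < xPm"
  by (simp add: field_simps)

lemma unique:
  assumes basis: "\<forall>h\<in>nonempty_subsets K.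
                  is_basis_cols (cells K Is) (B h) (dimU Is h) (U_space (cells K Is) h)"
    and ne: "cells K Is \<noteq> {}" and N: "total K Is n \<ge> 1" and lam: "lam > 0"
    and lamh: "\<forall>h\<in>nonempty_subsets K. lamh h > 0"
    and t1: "\<theta>1 \<in> params K Is" and t2: "\<theta>2 \<in> params K Is"
    and m1: "\<forall>\<theta>'\<in>params K Is. penalized K Is B n lam lamh \<theta>' \<le> penalized K Is B n lam lamh \<theta>1"
    and m2: "\<forall>\<theta>'\<in>params K Is. penalized K Is B n lam lamh \<theta>' \<le> penalized K Is B n lam lamh \<theta>2"
  shows "\<theta>1 = \<theta>2"
proof -
  let ?C = "cells K Is" let ?NS = "nonempty_subsets K"
  let ?P = "penalized K Is B n lam lamh"
  define \<theta>m where "\<theta>m = (\<lambda>h j. 1/2 * \<theta>1 h j + 1/2 * \<theta>2 h j)"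
  have tm: "\<theta>m \<in> params K Is" unfolding \<theta>m_def by (rule params_lin[OF t1 t2])
  define a where "a = Utheta K Is B \<theta>1"
  define b where "b = Utheta K Is B \<theta>2"
  have Um: "Utheta K Is B \<theta>m i = (a i + b i) / 2" for i
    unfolding \<theta>m_def a_def b_def Utheta_lin by simp
  have eqP: "?P \<theta>1 = ?P \<theta>2" using m1 m2 t1 t2 by (meson order_antisym)
  have Pm: "?P \<theta>m \<le> ?P \<theta>1" using m1 tm by blast
  have lin: "(\<Sum>i\<in>?C. real (n i) * Utheta K Is B \<theta>m i)
     = ((\<Sum>i\<in>?C. real (n i) * a i) + (\<Sum>i\<in>?C. real (n i) * b i)) / 2"
  proof -
    have "(\<Sum>i\<in>?C. real (n i) * Utheta K Is B \<theta>m i) = (\<Sum>i\<in>?C. (real (n i) * a i + real (n i) * b i) / 2)"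
      unfolding Um by (intro sum.cong refl) (simp add: algebra_simps)
    also have "\<dots> = ((\<Sum>i\<in>?C. real (n i) * a i) + (\<Sum>i\<in>?C. real (n i) * b i)) / 2"
      by (simp only: sum_divide_distrib[symmetric] sum.distrib)
    finally show ?thesis .
  qed
  have pen: "(\<Sum>h\<in>?NS. lamh h * block_norm Is \<theta>m h)
     \<le> ((\<Sum>h\<in>?NS. lamh h * block_norm Is \<theta>1 h) + (\<Sum>h\<in>?NS. lamh h * block_norm Is \<theta>2 h)) / 2"
  proof -
    have "(\<Sum>h\<in>?NS. lamh h * block_norm Is \<theta>m h)
       \<le> (\<Sum>h\<in>?NS. lamh h * ((block_norm Is \<theta>1 h + block_norm Is \<theta>2 h) / 2))"
      unfolding \<theta>m_def using lamh by (intro sum_mono mult_left_mono block_norm_mid) auto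
    also have "\<dots> = ((\<Sum>h\<in>?NS. lamh h * block_norm Is \<theta>1 h) + (\<Sum>h\<in>?NS. lamh h * block_norm Is \<theta>2 h)) / 2"
    proof -
      have "(\<Sum>h\<in>?NS. lamh h * ((block_norm Is \<theta>1 h + block_norm Is \<theta>2 h) / 2))
          = (\<Sum>h\<in>?NS. (lamh h * block_norm Is \<theta>1 h + lamh h * block_norm Is \<theta>2 h) / 2)"
        by (intro sum.cong refl) (simp add: algebra_simps)
      then show ?thesis by (simp only: sum_divide_distrib[symmetric] sum.distrib)
    qed
    finally show ?thesis .
  qed
  have lpen: "lam * (\<Sum>h\<in>?NS. lamh h * block_norm Is \<theta>m h)
     \<le> lam * (((\<Sum>h\<in>?NS. lamh h * block_norm Is \<theta>1 h) + (\<Sum>h\<in>?NS. lamh h * block_norm Is \<theta>2 h)) / 2)"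
    using pen lam by (intro mult_left_mono) auto
  have lpen': "lam * (\<Sum>h\<in>?NS. lamh h * block_norm Is \<theta>m h)
     \<le> (lam * (\<Sum>h\<in>?NS. lamh h * block_norm Is \<theta>1 h) + lam * (\<Sum>h\<in>?NS. lamh h * block_norm Is \<theta>2 h)) / 2"
    using lpen by (simp add: field_simps)
  have linm: "(\<Sum>i\<in>?C. real (n i) * Utheta K Is B \<theta>m i) / real (total K Is n)
     = ((\<Sum>i\<in>?C. real (n i) * Utheta K Is B \<theta>1 i) / real (total K Is n) + (\<Sum>i\<in>?C. real (n i) * Utheta K Is B \<theta>2 i) / real (total K Is n)) / 2"
    unfolding lin a_def b_def by (simp add: add_divide_distrib)
  have PFm: "?P \<theta>m = (\<Sum>i\<in>?C. real (n i) * Utheta K Is B \<theta>m i) / real (total K Is n)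
    - ln (\<Sum>i\<in>?C. exp (Utheta K Is B \<theta>m i))
    + (ln (fact (total K Is n) :: real) - (\<Sum>i\<in>?C. ln (fact (n i) :: real))) / real (total K Is n)
    - lam * (\<Sum>h\<in>?NS. lamh h * block_norm Is \<theta>m h)" by (rule pen_form[OF N])
  have PF1: "?P \<theta>1 = (\<Sum>i\<in>?C. real (n i) * Utheta K Is B \<theta>1 i) / real (total K Is n)
    - ln (\<Sum>i\<in>?C. exp (Utheta K Is B \<theta>1 i))
    + (ln (fact (total K Is n) :: real) - (\<Sum>i\<in>?C. ln (fact (n i) :: real))) / real (total K Is n)
    - lam * (\<Sum>h\<in>?NS. lamh h * block_norm Is \<theta>1 h)" by (rule pen_form[OF N])
  have PF2: "?P \<theta>2 = (\<Sum>i\<in>?C. real (n i) * Utheta K Is B \<theta>2 i) / real (total K Is n)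
    - ln (\<Sum>i\<in>?C. exp (Utheta K Is B \<theta>2 i))
    + (ln (fact (total K Is n) :: real) - (\<Sum>i\<in>?C. ln (fact (n i) :: real))) / real (total K Is n)
    - lam * (\<Sum>h\<in>?NS. lamh h * block_norm Is \<theta>2 h)" by (rule pen_form[OF N])
  have const: "\<forall>i\<in>?C. \<forall>j\<in>?C. a i - b i = a j - b j"
  proof (rule ccontr)
    assume "\<not> ?thesis"
    then have "\<exists>i\<in>?C. \<exists>j\<in>?C. a i - b i \<noteq> a j - b j" by blast
    from lse_mid(2)[OF finite_cells ne this]
    have "2 * ln (\<Sum>i\<in>?C. exp (Utheta K Is B \<theta>m i)) < ln (\<Sum>i\<in>?C. exp (a i)) + ln (\<Sum>i\<in>?C. exp (b i))"
      unfolding Um .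
    then have strict: "2 * ln (\<Sum>i\<in>?C. exp (Utheta K Is B \<theta>m i)) < ln (\<Sum>i\<in>?C. exp (Utheta K Is B \<theta>1 i)) + ln (\<Sum>i\<in>?C. exp (Utheta K Is B \<theta>2 i))"
      unfolding a_def b_def .
    have "?P \<theta>m > ?P \<theta>1"
      by (rule lin_aux[OF PFm PF1 PF2 eqP strict lpen' linm])
    then show False using Pm by simp
  qed
  obtain i0 where i0: "i0 \<in> ?C" using ne by blast
  have ci: "\<And>i. i \<in> ?C \<Longrightarrow> a i - b i = a i0 - b i0" using const i0 by blast
  define \<delta> where "\<delta> = (\<lambda>h j. \<theta>1 h j + (-1) * \<theta>2 h j)"
  have Ud: "Utheta K Is B \<delta> i = a i - b i" for i unfolding \<delta>_def Utheta_add a_def b_def by simp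
  have "(\<Sum>i\<in>?C. Utheta K Is B \<delta> i) = (\<Sum>i\<in>?C. a i0 - b i0)"
    unfolding Ud using ci by (intro sum.cong refl) auto
  then have "real (card ?C) * (a i0 - b i0) = 0" using Utheta_sum0[OF basis, of \<delta>] by simp
  moreover have "card ?C > 0" using ne finite_cells by (simp add: card_gt_0_iff)
  ultimately have c0: "a i0 - b i0 = 0" by simp
  have "\<forall>i\<in>?C. Utheta K Is B \<delta> i = 0" unfolding Ud using ci c0 by simp
  then have "\<delta> h j = 0" if "h \<in> ?NS" "j < dimU Is h" for h j using indep[OF basis _ that] by blast
  then have "\<theta>1 h j = \<theta>2 h j" for h j
    using t1 t2 unfolding \<delta>_def params_def by (cases "h \<in> ?NS \<and> j < dimU Is h") (auto simp: not_less)
  then show ?thesis by (auto simp: fun_eq_iff)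
qed



lemma bn_pos:
  assumes "\<exists>j<dimU Is h. \<theta> h j \<noteq> 0" shows "block_norm Is \<theta> h > 0"
proof -
  obtain j where j: "j < dimU Is h" "\<theta> h j \<noteq> 0" using assms by blast
  have "0 < (\<theta> h j)\<^sup>2" using j by simp
  also have "\<dots> \<le> (\<Sum>j<dimU Is h. (\<theta> h j)\<^sup>2)" using j by (intro member_le_sum) auto
  finally show ?thesis unfolding block_norm_def by simp
qed

lemma sum_delta_gen:
  assumes "finite A" "j \<in> A" "\<And>j'. j' \<in> A \<Longrightarrow> j' \<noteq> j \<Longrightarrow> f j' = 0"
  shows "(\<Sum>j'\<in>A. f j') = f j"
proof -
  have "(\<Sum>j'\<in>A. f j') = (\<Sum>j'\<in>A. if j' = j then f j else 0)"
    using assms(3) by (intro sum.cong) auto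
  then show ?thesis using assms(1,2) by simp
qed

lemma kkt_nonzero:
  assumes ne: "cells K Is \<noteq> {}" and N: "total K Is n \<ge> 1"
    and t: "\<theta> \<in> params K Is"
    and m: "\<forall>\<theta>'\<in>params K Is. penalized K Is B n lam lamh \<theta>' \<le> penalized K Is B n lam lamh \<theta>"
    and h: "h \<in> nonempty_subsets K" and nz: "\<exists>j<dimU Is h. \<theta> h j \<noteq> 0" and j: "j < dimU Is h"
  shows "- score K Is B n \<theta> h j / real (total K Is n) + lam * lamh h * \<theta> h j / block_norm Is \<theta> h = 0"
proof -
  let ?NS = "nonempty_subsets K"
  define v where "v = (\<lambda>h' j'. if h' = h \<and> j' = j then 1 else (0::real))"
  have vp: "v \<in> params K Is" unfolding v_def params_def using h j by auto
  define g where "g = (\<lambda>t. penalized K Is B n lam lamh (\<lambda>h' j'. \<theta> h' j' + t * v h' j'))"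
  have bnp: "block_norm Is \<theta> h > 0" using nz by (rule bn_pos)
  have dl: "((\<lambda>t. loglik K Is B n (\<lambda>h' j'. \<theta> h' j' + t * v h' j')) has_real_derivative score K Is B n \<theta> h j) (at 0)"
  proof -
    have "(\<Sum>h'\<in>?NS. \<Sum>j'<dimU Is h'. v h' j' * score K Is B n \<theta> h' j')
        = (\<Sum>h'\<in>?NS. if h' = h then score K Is B n \<theta> h j else 0)"
    proof (intro sum.cong refl)
      fix h' assume "h' \<in> ?NS"
      show "(\<Sum>j'<dimU Is h'. v h' j' * score K Is B n \<theta> h' j') = (if h' = h then score K Is B n \<theta> h j else 0)"
      proof (cases "h' = h")
        case True
        then show ?thesis using j by (subst sum_delta_gen[of _ j]) (auto simp: v_def)
      next
        case False then show ?thesis unfolding v_def by simp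
      qed
    qed
    also have "\<dots> = score K Is B n \<theta> h j" using h finite_NS by simp
    finally show ?thesis using loglik_deriv[OF ne, of B n \<theta> v] by simp
  qed
  define D where "D = (\<lambda>h'. if h' = h then \<theta> h j / block_norm Is \<theta> h else 0)"
  have db: "((\<lambda>t. lamh h' * block_norm Is (\<lambda>h' j'. \<theta> h' j' + t * v h' j') h') has_real_derivative lamh h' * D h') (at 0)" for h'
  proof (cases "h' = h")
    case False
    then have "(\<lambda>t. lamh h' * block_norm Is (\<lambda>h' j'. \<theta> h' j' + t * v h' j') h') = (\<lambda>t. lamh h' * block_norm Is \<theta> h')"
      unfolding v_def block_norm_def by simp
    then show ?thesis unfolding D_def using False by (simp add: DERIV_const)
  next
    case True
    define Q where "Q = (\<lambda>t. \<Sum>j'<dimU Is h. (\<theta> h j' + t * v h j')\<^sup>2)"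
    have Q0: "Q 0 = (block_norm Is \<theta> h)\<^sup>2" unfolding Q_def block_norm_def by (simp add: sum_nonneg)
    have Q0p: "Q 0 > 0" using Q0 bnp by simp
    have dQ: "(Q has_real_derivative 2 * \<theta> h j) (at 0)"
    proof -
      have "(Q has_real_derivative (\<Sum>j'<dimU Is h. 2 * (\<theta> h j' + 0 * v h j') * v h j')) (at 0)"
        unfolding Q_def by (rule derivative_eq_intros refl | simp add: mult_ac)+
      moreover have "(\<Sum>j'<dimU Is h. 2 * (\<theta> h j' + 0 * v h j') * v h j') = 2 * \<theta> h j"
        using j by (subst sum_delta_gen[of _ j]) (auto simp: v_def)
      ultimately show ?thesis by simp
    qed
    have "((\<lambda>t. sqrt (Q t)) has_real_derivative inverse (sqrt (Q 0)) / 2 * (2 * \<theta> h j)) (at 0)"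
      by (rule DERIV_chain2[OF DERIV_real_sqrt[OF Q0p] dQ])
    moreover have "inverse (sqrt (Q 0)) / 2 * (2 * \<theta> h j) = \<theta> h j / block_norm Is \<theta> h"
      unfolding Q0 using bnp by (simp add: field_simps)
    ultimately have "((\<lambda>t. sqrt (Q t)) has_real_derivative \<theta> h j / block_norm Is \<theta> h) (at 0)" by simp
    then have "((\<lambda>t. lamh h * sqrt (Q t)) has_real_derivative lamh h * (\<theta> h j / block_norm Is \<theta> h)) (at 0)"
      by (rule DERIV_cmult)
    then show ?thesis unfolding D_def Q_def block_norm_def using True by simp
  qed
  have dg: "(g has_real_derivative score K Is B n \<theta> h j / real (total K Is n) - lam * (\<Sum>h'\<in>?NS. lamh h' * D h')) (at 0)"
    unfolding g_def penalized_def
    by (rule DERIV_diff[OF DERIV_cdivide[OF dl] DERIV_cmult[OF DERIV_sum[OF db]]])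
  have "(\<Sum>h'\<in>?NS. lamh h' * D h') = lamh h * (\<theta> h j / block_norm Is \<theta> h)"
    using h finite_NS by (subst sum_delta_gen[of _ h]) (auto simp: D_def)
  with dg have dg': "(g has_real_derivative score K Is B n \<theta> h j / real (total K Is n) - lam * lamh h * \<theta> h j / block_norm Is \<theta> h) (at 0)"
    by (simp add: mult.assoc)
  have g0: "g 0 = penalized K Is B n lam lamh \<theta>" unfolding g_def by simp
  have "\<forall>y. \<bar>0 - y\<bar> < 1 \<longrightarrow> g y \<le> g 0"
    unfolding g0 unfolding g_def using m params_add[OF t vp] by blast
  from DERIV_local_max[OF dg' zero_less_one this]
  show ?thesis by simp
qed

lemma kkt_zero:
  assumes ne: "cells K Is \<noteq> {}" and N: "total K Is n \<ge> 1" and lam: "lam > 0"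
    and lamh: "\<forall>h\<in>nonempty_subsets K. lamh h > 0"
    and t: "\<theta> \<in> params K Is"
    and m: "\<forall>\<theta>'\<in>params K Is. penalized K Is B n lam lamh \<theta>' \<le> penalized K Is B n lam lamh \<theta>"
    and h: "h \<in> nonempty_subsets K" and z: "\<forall>j<dimU Is h. \<theta> h j = 0"
  shows "sqrt (\<Sum>j<dimU Is h. (score K Is B n \<theta> h j)\<^sup>2) / real (total K Is n) \<le> lam * lamh h"
proof (rule ccontr)
  let ?NS = "nonempty_subsets K"
  define s where "s = (\<lambda>j. score K Is B n \<theta> h j)"
  define S where "S = sqrt (\<Sum>j<dimU Is h. (s j)\<^sup>2)"
  define NN where "NN = real (total K Is n)"
  have NNp: "NN > 0" unfolding NN_def using N by simp
  have lh: "lamh h > 0" using lamh h by blast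
  assume "\<not> ?thesis"
  then have gt: "S / NN > lam * lamh h" unfolding S_def NN_def s_def by simp
  then have Sp: "S > 0" using lam lh NNp
    by (smt (verit, ccfv_SIG) divide_nonpos_pos mult_pos_pos)
  define v where "v = (\<lambda>h' j'. if h' = h \<and> j' < dimU Is h then s j' else (0::real))"
  have vp: "v \<in> params K Is" unfolding v_def params_def using h by auto
  define pen0 where "pen0 = (\<Sum>h'\<in>?NS. lamh h' * block_norm Is \<theta> h')"
  define f where "f = (\<lambda>t. loglik K Is B n (\<lambda>h' j'. \<theta> h' j' + t * v h' j') / NN - lam * pen0 - lam * lamh h * (t * S))"
  have bn_other: "block_norm Is (\<lambda>h' j'. \<theta> h' j' + t * v h' j') h' = block_norm Is \<theta> h'" if "h' \<noteq> h" for h' t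
    unfolding block_norm_def v_def using that by simp
  have bn_h: "block_norm Is (\<lambda>h' j'. \<theta> h' j' + t * v h' j') h = t * S" if "t \<ge> 0" for t
  proof -
    have "(\<Sum>j<dimU Is h. (\<theta> h j + t * v h j)\<^sup>2) = t\<^sup>2 * (\<Sum>j<dimU Is h. (s j)\<^sup>2)"
      unfolding sum_distrib_left using z by (intro sum.cong refl) (auto simp: v_def power_mult_distrib)
    then show ?thesis unfolding block_norm_def S_def using that by (simp add: real_sqrt_mult)
  qed
  have bn0: "block_norm Is \<theta> h = 0" unfolding block_norm_def using z by simp
  have feq: "f t = penalized K Is B n lam lamh (\<lambda>h' j'. \<theta> h' j' + t * v h' j')" if "t \<ge> 0" for t
  proof -
    have "(\<Sum>h'\<in>?NS. lamh h' * block_norm Is (\<lambda>h' j'. \<theta> h' j' + t * v h' j') h')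
        = (\<Sum>h'\<in>?NS. lamh h' * block_norm Is \<theta> h' + (if h' = h then lamh h * (t * S) else 0))"
      using bn_other bn_h[OF that] bn0 by (intro sum.cong refl) auto
    also have "\<dots> = pen0 + lamh h * (t * S)"
      unfolding pen0_def sum.distrib using h finite_NS by simp
    finally show ?thesis unfolding f_def penalized_def NN_def by (simp add: algebra_simps)
  qed
  have dl: "((\<lambda>t. loglik K Is B n (\<lambda>h' j'. \<theta> h' j' + t * v h' j')) has_real_derivative S\<^sup>2) (at 0)"
  proof -
    have "(\<Sum>h'\<in>?NS. \<Sum>j'<dimU Is h'. v h' j' * score K Is B n \<theta> h' j')
        = (\<Sum>j'<dimU Is h. v h j' * score K Is B n \<theta> h j')"
      using h finite_NS by (subst sum_delta_gen[of _ h]) (auto simp: v_def)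
    also have "\<dots> = (\<Sum>j<dimU Is h. (s j)\<^sup>2)" unfolding v_def s_def by (simp add: power2_eq_square)
    also have "\<dots> = S\<^sup>2" unfolding S_def by (simp add: sum_nonneg)
    finally show ?thesis using loglik_deriv[OF ne, of B n \<theta> v] by simp
  qed
  have df: "(f has_real_derivative S\<^sup>2 / NN - 0 - lam * lamh h * (1 * S)) (at 0)"
    unfolding f_def
    by (intro DERIV_diff DERIV_cdivide dl DERIV_const DERIV_cmult DERIV_cmult_right DERIV_ident)
  have "S\<^sup>2 / NN - 0 - lam * lamh h * (1 * S) = S * (S / NN - lam * lamh h)"
    by (simp add: power2_eq_square algebra_simps)
  also have "\<dots> > 0" using Sp gt by simp
  finally obtain d where d: "d > 0" "\<forall>t>0. t < d \<longrightarrow> f 0 < f (0 + t)"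
    using DERIV_pos_inc_right[OF df] by blast
  have "f 0 < f (d/2)" using d by simp
  moreover have "f 0 = penalized K Is B n lam lamh \<theta>" using feq[of 0] by simp
  moreover have "f (d/2) \<le> penalized K Is B n lam lamh \<theta>"
    using feq[of "d/2"] d m params_add[OF t vp, of "d/2"] by simp
  ultimately show False by simp
qed


theorem lemma1:
  fixes K :: nat and Is :: "nat \<Rightarrow> nat"
    and B :: "nat set \<Rightarrow> nat \<Rightarrow> cell \<Rightarrow> real"
    and n :: "cell \<Rightarrow> nat" and lam :: real and lamh :: "nat set \<Rightarrow> real"
  assumes K: "K \<ge> 1"
    and Is: "\<forall>k<K. Is k \<ge> 2"
    and basis: "\<forall>h\<in>nonempty_subsets K.
                  is_basis_cols (cells K Is) (B h) (dimU Is h) (U_space (cells K Is) h)"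
    and N: "total K Is n \<ge> 1"
    and lam: "lam > 0"
    and lamh: "\<forall>h\<in>nonempty_subsets K. lamh h > 0"
  shows "\<exists>\<theta>\<in>params K Is.
     (\<forall>\<theta>'\<in>params K Is. penalized K Is B n lam lamh \<theta>' \<le> penalized K Is B n lam lamh \<theta>)
   \<and> (\<forall>\<theta>'\<in>params K Is.
        (\<forall>\<theta>''\<in>params K Is. penalized K Is B n lam lamh \<theta>'' \<le> penalized K Is B n lam lamh \<theta>')
        \<longrightarrow> \<theta>' = \<theta>)
   \<and> (\<forall>h\<in>nonempty_subsets K.
        ((\<exists>j<dimU Is h. \<theta> h j \<noteq> 0) \<longrightarrow>
           (\<forall>j<dimU Is h. - score K Is B n \<theta> h j / real (total K Is n)
                + lam * lamh h * \<theta> h j / block_norm Is \<theta> h = 0))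
      \<and> ((\<forall>j<dimU Is h. \<theta> h j = 0) \<longrightarrow>
           sqrt (\<Sum>j<dimU Is h. (score K Is B n \<theta> h j)\<^sup>2) / real (total K Is n)
             \<le> lam * lamh h))"
  proof -
  have ne: "cells K Is \<noteq> {}" by (rule cells_ne[OF Is])
  obtain \<theta> where t: "\<theta> \<in> params K Is"
    and m: "\<forall>\<theta>'\<in>params K Is. penalized K Is B n lam lamh \<theta>' \<le> penalized K Is B n lam lamh \<theta>"
    using exists_max[OF ne N lam lamh] by blast
  have u: "\<forall>\<theta>'\<in>params K Is.
        (\<forall>\<theta>''\<in>params K Is. penalized K Is B n lam lamh \<theta>'' \<le> penalized K Is B n lam lamh \<theta>')
        \<longrightarrow> \<theta>' = \<theta>"
    using unique[OF basis ne N lam lamh _ t _ m] by blast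
  have k: "\<forall>h\<in>nonempty_subsets K.
        ((\<exists>j<dimU Is h. \<theta> h j \<noteq> 0) \<longrightarrow>
           (\<forall>j<dimU Is h. - score K Is B n \<theta> h j / real (total K Is n)
                + lam * lamh h * \<theta> h j / block_norm Is \<theta> h = 0))
      \<and> ((\<forall>j<dimU Is h. \<theta> h j = 0) \<longrightarrow>
           sqrt (\<Sum>j<dimU Is h. (score K Is B n \<theta> h j)\<^sup>2) / real (total K Is n)
             \<le> lam * lamh h)"
    using kkt_nonzero[OF ne N t m] kkt_zero[OF ne N lam lamh t m] by blast
  show ?thesis using t m u k by blast
qed

end
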